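(* Let $n>2k-t$, $q\geq 3$ and $k>2t+1$. Then \[\theta_{k}-\theta_{k-t}+\left[{n-t\atop k-t}\right]_q-q^{(k-t+1)(k-t)}\left[{n-k-1\atop k-t}\right]_q>\left[{n-t-2\atop k-t-2}\right]_q\left(1+\theta_{t+1}q^{k-t-1}\frac{q^{n-k}-1}{q^{k-t-1}-1}\right).\]
   Context: $\left[{n\atop k}\right]_q=\frac{(q^n-1)\cdots(q^{n-k+1}-1)}{(q^k-1)\cdots(q-1)}$ for $k>0$, $=1$ for $k=0$; $\theta_m=\frac{q^{m+1}-1}{q-1}$; $q$ is a prime power. (In the paper these are the sizes of the two affine constructions: the left side is the size of a maximal $t$-intersecting family of affine $k$-spaces built from an affine $t$-space $\delta$ and an affine $k$-space $\pi$ meeting it in a $(t-1)$-space; the right side is that of the family of affine $k$-spaces meeting a fixed affine $(t+2)$-space in a prescribed set of $(t+1)$-spaces.) *)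

theory Defs
  imports Complex_Main "HOL-Computational_Algebra.Primes"
begin

definition gauss_binom :: "real \<Rightarrow> nat \<Rightarrow> nat \<Rightarrow> real" where
  "gauss_binom q n k = (\<Prod>i<k. (q ^ (n - i) - 1) / (q ^ (i + 1) - 1))"

definition theta :: "real \<Rightarrow> nat \<Rightarrow> real" where
  "theta q m = (q ^ (m + 1) - 1) / (q - 1)"

definition prime_power :: "nat \<Rightarrow> bool" where
  "prime_power q \<longleftrightarrow> (\<exists>p e. prime p \<and> e \<ge> 1 \<and> q = p ^ e)"

end

theory Submission
  imports Defs
begin

definition gnum :: "real \<Rightarrow> nat \<Rightarrow> nat \<Rightarrow> real" where
  "gnum x N j = (\<Prod>i<j. x ^ (N - i) - 1)"
definition gden :: "real \<Rightarrow> nat \<Rightarrow> real" where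
  "gden x j = (\<Prod>i<j. x ^ (i + 1) - 1)"

lemma pw1: "(x::real) > 1 \<Longrightarrow> 1 < x * x ^ a"
  by (metis one_less_power power_Suc zero_less_Suc)

lemma pw1': "(x::real) \<ge> 1 \<Longrightarrow> 1 \<le> x * x ^ a"
  by (metis one_le_power power_Suc)

lemma frac_aux: "(D::real) > 0 \<Longrightarrow> e > 0 \<Longrightarrow> A = g * e + y * B \<Longrightarrow> A / (D * e) = g / D + y * (B / (D * e))"
  by (simp add: field_simps)

lemma gb_split: "gauss_binom x N j = gnum x N j / gden x j"
  unfolding gauss_binom_def gnum_def gden_def by (rule prod_dividef)

lemma gden_pos: "x > 1 \<Longrightarrow> gden x j > 0"
  unfolding gden_def by (rule prod_pos) (simp add: pw1)

lemma gden_Suc: "gden x (Suc j) = gden x j * (x ^ Suc j - 1)"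
  unfolding gden_def by simp

lemma gnum_Suc: "gnum x N (Suc j) = gnum x N j * (x ^ (N - j) - 1)"
  unfolding gnum_def by simp

lemma gnum_shift: "gnum x (Suc N) (Suc j) = (x ^ Suc N - 1) * gnum x N j"
  unfolding gnum_def by (subst prod.lessThan_Suc_shift) simp

lemma gnum_zero: "N < j \<Longrightarrow> gnum x N j = 0"
  unfolding gnum_def by (rule prod_zero) (auto intro!: bexI[of _ N])

lemma gb_nonneg: "x \<ge> 1 \<Longrightarrow> gauss_binom x N j \<ge> 0"
  unfolding gauss_binom_def by (rule prod_nonneg) (simp add: one_le_power pw1')

lemma gb_pos: "x > 1 \<Longrightarrow> j \<le> N \<Longrightarrow> gauss_binom x N j > 0"
  unfolding gauss_binom_def by (rule prod_pos) (auto simp: one_less_power pw1)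

lemma gb_step: "x > 1 \<Longrightarrow> gauss_binom x N (Suc j) = gauss_binom x N j * (x ^ (N - j) - 1) / (x ^ Suc j - 1)"
  unfolding gauss_binom_def by simp

lemma gb_shift: "x > 1 \<Longrightarrow> gauss_binom x (Suc N) (Suc j) = gauss_binom x N j * (x ^ Suc N - 1) / (x ^ Suc j - 1)"
  by (simp add: gb_split gnum_shift gden_Suc)

lemma gb_pascal:
  assumes x: "x > 1"
  shows "gauss_binom x (Suc N) (Suc j) = gauss_binom x N j + x ^ Suc j * gauss_binom x N (Suc j)"
proof (cases "j \<le> N")
  case True
  have d: "gden x j > 0" using gden_pos[OF x] .
  have e: "x ^ Suc j - 1 > 0" using x by (simp add: pw1)
  have p: "x ^ Suc j * x ^ (N - j) = x ^ Suc N"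
    using True by (simp add: power_add[symmetric])
  have a1: "gauss_binom x (Suc N) (Suc j) = (x ^ Suc N - 1) * gnum x N j / (gden x j * (x ^ Suc j - 1))"
    by (simp add: gb_split gnum_shift gden_Suc)
  have a2: "gauss_binom x N (Suc j) = gnum x N j * (x ^ (N - j) - 1) / (gden x j * (x ^ Suc j - 1))"
    by (simp add: gb_split gnum_Suc gden_Suc)
  have a3: "gauss_binom x N j = gnum x N j / gden x j" by (simp add: gb_split)
  have "(x ^ Suc N - 1) * gnum x N j = gnum x N j * (x ^ Suc j - 1) + x ^ Suc j * (gnum x N j * (x ^ (N - j) - 1))"
    unfolding p[symmetric] by (simp add: algebra_simps)
  then show ?thesis unfolding a1 a2 a3
    using d e by (rule frac_aux[rotated 2])
next
  case False
  then show ?thesis by (simp add: gb_split gnum_shift gnum_Suc gden_Suc gnum_zero)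
qed

lemma gb_iter:
  assumes x: "x > 1"
  shows "gauss_binom x (N + Suc (Suc r)) (Suc c) - x ^ (Suc c * Suc (Suc r)) * gauss_binom x N (Suc c)
     \<ge> gauss_binom x (N + Suc r) c + x ^ (Suc c * Suc r) * gauss_binom x N c"
proof (induction r)
  case 0
  have "gauss_binom x (Suc (Suc N)) (Suc c) = gauss_binom x (Suc N) c + x ^ Suc c * gauss_binom x (Suc N) (Suc c)"
    using gb_pascal[OF x] by simp
  moreover have "gauss_binom x (Suc N) (Suc c) = gauss_binom x N c + x ^ Suc c * gauss_binom x N (Suc c)"
    using gb_pascal[OF x] by simp
  moreover have E: "x ^ (Suc c * Suc (Suc 0)) = x ^ Suc c * x ^ Suc c"
  proof -
    have "Suc c * Suc (Suc 0) = Suc c + Suc c" by simp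
    then show ?thesis by (simp only: power_add)
  qed
  ultimately show ?case unfolding E by (simp add: algebra_simps)
next
  case (Suc r)
  have P: "gauss_binom x (N + Suc (Suc (Suc r))) (Suc c) = gauss_binom x (N + Suc (Suc r)) c
      + x ^ Suc c * gauss_binom x (N + Suc (Suc r)) (Suc c)"
    using gb_pascal[OF x, of "N + Suc (Suc r)" c] by simp
  have e1: "x ^ (Suc c * Suc (Suc (Suc r))) = x ^ Suc c * x ^ (Suc c * Suc (Suc r))"
    by (simp add: power_add[symmetric])
  have e2: "x ^ (Suc c * Suc (Suc r)) = x ^ Suc c * x ^ (Suc c * Suc r)"
    by (simp add: power_add[symmetric])
  have pc: "x ^ Suc c > 0" using x by simp
  have A: "x ^ Suc c * (gauss_binom x (N + Suc (Suc r)) (Suc c) - x ^ (Suc c * Suc (Suc r)) * gauss_binom x N (Suc c))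
     \<ge> x ^ Suc c * (gauss_binom x (N + Suc r) c + x ^ (Suc c * Suc r) * gauss_binom x N c)"
    using Suc.IH pc by (simp add: mult_left_mono)
  have B: "x ^ Suc c * gauss_binom x (N + Suc r) c \<ge> 0" using gb_nonneg x by simp
  show ?case using P A B unfolding e1 e2 by (simp add: algebra_simps)
qed

lemma gb_key:
  assumes x: "x \<ge> 3"
  shows "M \<ge> b + 1 \<Longrightarrow> gauss_binom x (M + b) b * (x ^ (M + 1 - b) - 2) \<le> x ^ (b * b) * x ^ (M + 1 - b) * gauss_binom x M b"
proof (induction b)
  case 0
  then show ?case by (simp add: gauss_binom_def)
next
  case (Suc b)
  have x1: "x > 1" using x by simp
  define Y where "Y = x ^ (M - b)"
  define Z where "Z = x ^ (2 * b + 1)"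
  define g where "g = gauss_binom x (M + b) b"
  define h where "h = gauss_binom x M b"
  have Mb: "M - b \<ge> 2" using Suc.prems by simp
  have Y9: "Y \<ge> x ^ 2" unfolding Y_def using Mb x by (simp add: power_increasing)
  have x9: "x ^ 2 \<ge> 3 ^ 2" by (rule power_mono) (use x in auto)
  have Y2: "Y \<ge> 9" using Y9 x9 by simp
  have Z1: "Z \<ge> 1" unfolding Z_def by (rule one_le_power) (use x in auto)
  have IH: "g * (x * Y - 2) \<le> x ^ (b * b) * (x * Y) * h"
  proof -
    have "M + 1 - b = Suc (M - b)" using Suc.prems by simp
    then show ?thesis using Suc.IH Suc.prems unfolding g_def h_def Y_def by simp
  qed
  have g0: "g \<ge> 0" unfolding g_def using gb_nonneg x by simp
  have h0: "h \<ge> 0" unfolding h_def using gb_nonneg x by simp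
  have L1: "gauss_binom x (M + Suc b) (Suc b) = g * (x ^ Suc (M + b) - 1) / (x ^ Suc b - 1)"
    unfolding g_def using gb_shift[OF x1, of "M + b" b] by simp
  have L2: "gauss_binom x M (Suc b) = h * (Y - 1) / (x ^ Suc b - 1)"
    unfolding h_def Y_def using gb_step[OF x1, of M b] by simp
  have e3: "x ^ Suc (M + b) = Z * Y" unfolding Z_def Y_def
    using Suc.prems by (simp add: power_add[symmetric] add.commute)
  have e4: "M + 1 - Suc b = M - b" by simp
  have e5: "x ^ (Suc b * Suc b) = x ^ (b * b) * Z"
  proof -
    have "Suc b * Suc b = b * b + (2 * b + 1)" by simp
    then show ?thesis unfolding Z_def by (metis power_add)
  qed
  have den: "x ^ Suc b - 1 > 0" using x1 by (simp add: pw1)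
  have xY0: "x * Y \<ge> 1 * Y" by (rule mult_right_mono) (use x Y2 in auto)
  have xY: "x * Y - 2 > 0" using Y2 xY0 by linarith
  have bb: "x ^ (b * b) > 0" using x by simp
  have core: "g * (Z * Y - 1) * (Y - 2) \<le> x ^ (b * b) * Z * Y * h * (Y - 1)"
  proof -
    have s1: "g * (Z * Y - 1) * (Y - 2) \<le> g * (Z * Y) * (Y - 2)"
      using g0 Y2 by (simp add: mult_right_mono mult_left_mono)
    have s2: "(x * Y) * (Y - 2) \<le> (x * Y - 2) * (Y - 1)"
    proof -
      have E: "(x * Y - 2) * (Y - 1) - (x * Y) * (Y - 2) = (x - 2) * Y + 2" by (simp add: algebra_simps)
      have "(x - 2) * Y \<ge> 0" using x Y2 by simp
      then show ?thesis using E by linarith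
    qed
    have s3: "g * (x * Y - 2) * (Z * Y * (Y - 2)) \<le> x ^ (b * b) * (x * Y) * h * (Z * Y * (Y - 2))"
      using IH Y2 Z1 by (intro mult_right_mono) auto
    have s4: "x ^ (b * b) * (x * Y) * h * (Z * Y * (Y - 2)) = x ^ (b * b) * h * Z * Y * ((x * Y) * (Y - 2))"
      by (simp add: algebra_simps)
    have s5: "x ^ (b * b) * h * Z * Y * ((x * Y) * (Y - 2)) \<le> x ^ (b * b) * h * Z * Y * ((x * Y - 2) * (Y - 1))"
      using s2 bb h0 Z1 Y2 by (intro mult_left_mono) auto
    have s6: "g * (x * Y - 2) * (Z * Y * (Y - 2)) = (x * Y - 2) * (g * (Z * Y) * (Y - 2))"
      by (simp add: algebra_simps)
    have s7: "x ^ (b * b) * h * Z * Y * ((x * Y - 2) * (Y - 1)) = (x * Y - 2) * (x ^ (b * b) * Z * Y * h * (Y - 1))"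
      by (simp add: algebra_simps)
    have "(x * Y - 2) * (g * (Z * Y) * (Y - 2)) \<le> (x * Y - 2) * (x ^ (b * b) * Z * Y * h * (Y - 1))"
      using s3 s4 s5 s6 s7 by linarith
    then have "g * (Z * Y) * (Y - 2) \<le> x ^ (b * b) * Z * Y * h * (Y - 1)"
      using xY by (simp add: mult_le_cancel_left)
    then show ?thesis using s1 by linarith
  qed
  define d where "d = x ^ Suc b - 1"
  have f1: "g * (Z * Y - 1) / d * (Y - 2) = (g * (Z * Y - 1) * (Y - 2)) / d" by simp
  have f2: "x ^ (b * b) * Z * Y * (h * (Y - 1) / d) = (x ^ (b * b) * Z * Y * h * (Y - 1)) / d" by simp
  have "(g * (Z * Y - 1) * (Y - 2)) / d \<le> (x ^ (b * b) * Z * Y * h * (Y - 1)) / d"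
    using core den unfolding d_def by (intro divide_right_mono) auto
  then show ?case
    unfolding L1 L2 e3 e4 e5 Y_def[symmetric] d_def[symmetric] f1 f2 .
qed

lemma gb_key2:
  assumes x: "x \<ge> 3" and M: "M \<ge> b + 1"
  shows "gauss_binom x (M + b) b \<le> 2 * x ^ (b * b) * gauss_binom x M b"
proof -
  define L where "L = x ^ (M + 1 - b)"
  have L4: "L \<ge> 4"
  proof -
    have "M + 1 - b \<ge> 2" using M by simp
    then have "L \<ge> x ^ 2" unfolding L_def using x by (simp add: power_increasing)
    moreover have "x ^ 2 \<ge> 3 ^ 2" by (rule power_mono) (use x in auto)
    ultimately show ?thesis by simp
  qed
  have K: "gauss_binom x (M + b) b * (L - 2) \<le> x ^ (b * b) * L * gauss_binom x M b"
    using gb_key[OF x M] unfolding L_def .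
  have g0: "gauss_binom x (M + b) b \<ge> 0" using gb_nonneg x by simp
  have h0: "x ^ (b * b) * gauss_binom x M b \<ge> 0" using gb_nonneg x by simp
  have "gauss_binom x (M + b) b * L \<le> 2 * (x ^ (b * b) * L * gauss_binom x M b)"
  proof -
    have a: "gauss_binom x (M + b) b * 2 \<le> gauss_binom x (M + b) b * (L - 2)"
      by (rule mult_left_mono) (use g0 L4 in auto)
    have b: "gauss_binom x (M + b) b * L = gauss_binom x (M + b) b * (L - 2) + gauss_binom x (M + b) b * 2"
      by (simp add: algebra_simps)
    show ?thesis using a b K by linarith
  qed
  then have "L * gauss_binom x (M + b) b \<le> L * (2 * x ^ (b * b) * gauss_binom x M b)"
    by (simp add: algebra_simps)
  then show ?thesis using L4 by (simp add: mult_le_cancel_left)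
qed

theorem mainTheorem18:
  fixes q n k t :: nat
  assumes "prime_power q"
    and "n > 2 * k - t"
    and "q \<ge> 3"
    and "k > 2 * t + 1"
  shows "theta (real q) k - theta (real q) (k - t) + gauss_binom (real q) (n - t) (k - t)
           - real q ^ ((k - t + 1) * (k - t)) * gauss_binom (real q) (n - k - 1) (k - t)
         > gauss_binom (real q) (n - t - 2) (k - t - 2)
           * (1 + theta (real q) (t + 1) * real q ^ (k - t - 1)
                * ((real q ^ (n - k) - 1) / (real q ^ (k - t - 1) - 1)))"
proof -
  define Q where "Q = real q"
  have Q3: "Q \<ge> 3" using assms(3) unfolding Q_def by simp
  have Q1: "Q > 1" using Q3 by simp
  define b where "b = k - t - 1"
  define c where "c = k - t - 2"
  define M where "M = n - k - 1"
  have bc: "b = Suc c" unfolding b_def c_def using assms(4) by simp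
  have kt: "k - t = Suc b" unfolding b_def using assms(4) by simp
  have nt: "n - t = M + Suc (Suc b)" unfolding M_def b_def using assms by simp
  have nt1: "M + Suc b = Suc (n - t - 2)" unfolding M_def b_def using assms by simp
  have nt2: "n - t - 2 = M + b" unfolding M_def b_def using assms by simp
  have nk: "n - t - 2 - c = n - k" unfolding c_def using assms by simp
  have Mb: "M \<ge> b + 1" unfolding M_def b_def using assms by simp
  define g0 where "g0 = gauss_binom Q (n - t - 2) c"
  define g1 where "g1 = gauss_binom Q (n - t - 2) b"
  define gM where "gM = gauss_binom Q M b"
  define G where "G = gauss_binom Q (n - t) (k - t) - Q ^ ((k - t + 1) * (k - t)) * gauss_binom Q (n - k - 1) (k - t)"
  have I: "G \<ge> gauss_binom Q (M + Suc b) b + Q ^ (Suc b * Suc b) * gM"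
    using gb_iter[OF Q1, of M b b] unfolding G_def kt nt gM_def M_def[symmetric]
    by (simp add: mult.commute)
  have P: "gauss_binom Q (M + Suc b) b = g0 + Q ^ b * g1"
  proof -
    have "gauss_binom Q (Suc (n - t - 2)) (Suc c) = gauss_binom Q (n - t - 2) c + Q ^ Suc c * gauss_binom Q (n - t - 2) (Suc c)"
      by (rule gb_pascal[OF Q1])
    then show ?thesis unfolding nt1 g0_def g1_def bc[symmetric] .
  qed
  have S: "g1 = g0 * (Q ^ (n - k) - 1) / (Q ^ b - 1)"
    unfolding g1_def g0_def bc using gb_step[OF Q1, of "n - t - 2" c] nk by simp
  have K: "g1 \<le> 2 * Q ^ (b * b) * gM"
    unfolding g1_def gM_def nt2 using gb_key2[OF Q3 Mb] .
  have g1pos: "g1 > 0" unfolding g1_def using gb_pos[OF Q1] assms unfolding b_def by simp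
  have th: "theta Q (t + 1) \<le> Q ^ (b + 1) / 2"
  proof -
    have "t + 1 + 1 \<le> b + 1" unfolding b_def using assms by simp
    then have "Q ^ (t + 1 + 1) \<le> Q ^ (b + 1)" by (rule power_increasing) (use Q1 in auto)
    moreover have "Q ^ (b + 1) * 2 \<le> Q ^ (b + 1) * (Q - 1)"
      by (rule mult_left_mono) (use Q3 in auto)
    ultimately have "Q ^ (t + 1 + 1) - 1 \<le> (Q ^ (b + 1)) / 2 * (Q - 1)"
      by simp
    then show ?thesis unfolding theta_def using Q1 by (simp add: divide_le_eq)
  qed
  have th0: "theta Q (t + 1) \<ge> 0"
  proof -
    have "1 \<le> Q ^ (t + 1 + 1)" by (rule one_le_power) (use Q1 in auto)
    then show ?thesis unfolding theta_def using Q1 by (intro divide_nonneg_nonneg) auto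
  qed
  have thd: "theta Q k - theta Q (k - t) \<ge> 0"
  proof -
    have "Q ^ (k - t + 1) \<le> Q ^ (k + 1)" using Q1 by (intro power_increasing) auto
    then show ?thesis unfolding theta_def using Q1 by (simp add: divide_right_mono)
  qed
  have R: "g0 * (1 + theta Q (t + 1) * Q ^ b * ((Q ^ (n - k) - 1) / (Q ^ b - 1)))
      = g0 + theta Q (t + 1) * Q ^ b * g1"
    unfolding S by (simp add: algebra_simps)
  have Bd: "theta Q (t + 1) * Q ^ b * g1 \<le> Q ^ (Suc b * Suc b) * gM"
  proof -
    have Qb: "Q ^ b \<ge> 0" using Q1 by simp
    have "theta Q (t + 1) * Q ^ b * g1 \<le> (Q ^ (b + 1) / 2) * Q ^ b * (2 * Q ^ (b * b) * gM)"
      using th th0 K g1pos Qb by (intro mult_mono) auto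
    also have "\<dots> = Q ^ (b + 1 + b + b * b) * gM" by (simp add: power_add)
    also have "b + 1 + b + b * b = Suc b * Suc b" by simp
    finally show ?thesis .
  qed
  have Qbg: "Q ^ b * g1 > 0" using g1pos Q1 by simp
  have final: "theta Q k - theta Q (k - t) + G > g0 * (1 + theta Q (t + 1) * Q ^ b * ((Q ^ (n - k) - 1) / (Q ^ b - 1)))"
    unfolding R using I P Bd Qbg thd by linarith
  have eb: "k - t - 1 = b" "k - t - 2 = c" unfolding b_def c_def by simp_all
  show ?thesis using final unfolding Q_def[symmetric] eb G_def g0_def by linarith
qed

end
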